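(* Let $\overrightarrow{W}$ be a Morse sequence on a simplicial complex $K$, with reference map $\curlywedge$ and coreference map $\curlyvee$. (1) If $z,z'\in Z_p(K)$ satisfy $\curlywedge(z)=\curlywedge(z')$ and $z,z'\subseteq W^+_p$, then $z=z'$. (2) If $z,z'\in Z^p(K)$ satisfy $\curlyvee(z)=\curlyvee(z')$ and $z,z'\subseteq K\setminus W^-_p$, then $z=z'$.
   Context: A simplicial complex $K$ is a finite collection of non-empty finite sets closed under taking non-empty subsets; $\dim\sigma=|\sigma|-1$, $K^{(p)}$ the set of $p$-simplices. A pair $(\sigma,\tau)$ with $\sigma\subsetneq\tau$ is a free pair for $K$ if $\tau$ is the only simplex other than $\sigma$ containing $\sigma$; $K$ is then an elementary expansion of $K\setminus\{\sigma,\tau\}$. If $\nu$ is a facet (maximal simplex) of $K$, $K$ is an elementary filling of $K\setminus\{\nu\}$. A Morse sequence on $K$ is a sequence $\langle\emptyset=K_0,\dots,K_k=K\rangle$ with each $K_i$ an elementary expansion or filling of $K_{i-1}$; simplices added by fillings are critical; for an expansion $K_i=K_{i-1}\cup\{\sigma,\tau\}$, $\sigma\subset\tau$, $(\sigma,\tau)$ is a regular pair, $\sigma$ lower regular, $\tau$ upper regular; $\widehat W,\underline W,\overline W$ denote the sets of critical, lower regular and upper regular simplices. $K[p]$ is the $\mathbb{Z}_2$-vector space of subsets of $K^{(p)}$ (sum = symmetric difference, $0=\emptyset$). For $\sigma\in K^{(p)}$, $\partial(\sigma)=\{\tau\in K^{(p-1)}:\tau\subset\sigma\}$, $\delta(\sigma)=\{\tau\in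 K^{(p+1)}:\sigma\subset\tau\}$, extended linearly; $Z_p(K)=\ker(\partial:K[p]\to K[p-1])$ (cycles) and $Z^p(K)=\ker(\delta:K[p]\to K[p+1])$ (cocycles). The reference map $\curlywedge$ is the unique map assigning to each $p$-simplex a set of critical $p$-simplices, extended linearly (mod 2), with $\curlywedge(\nu)=\{\nu\}$ for critical $\nu$ and $\curlywedge(\tau)=0=\curlywedge(\partial(\tau))$ for upper regular $\tau$; the coreference map $\curlyvee$ is the unique such map with $\curlyvee(\nu)=\{\nu\}$ for critical $\nu$ and $\curlyvee(\sigma)=0=\curlyvee(\delta(\sigma))$ for lower regular $\sigma$. Skeletons: $W^-_p=\{\nu\in\overline W:\dim\nu\le p\}\cup\{\nu\in\widehat W\cup\underline W:\dim\nu\le p-1\}$, $W^+_p=\{\nu\in\widehat W\cup\overline W:\dim\nu\le p\}\cup\{\nu\in\underline W:\dim\nu\le p-1\}$. *)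

theory Defs
  imports Main
begin

definition simplicial_complex :: "'v set set \<Rightarrow> bool" where
  "simplicial_complex K \<longleftrightarrow> finite K \<and>
     (\<forall>\<sigma>\<in>K. \<sigma> \<noteq> {} \<and> finite \<sigma>) \<and>
     (\<forall>\<sigma>\<in>K. \<forall>\<tau>. \<tau> \<noteq> {} \<and> \<tau> \<subseteq> \<sigma> \<longrightarrow> \<tau> \<in> K)"

definition sdim :: "'v set \<Rightarrow> int" where
  "sdim \<sigma> = int (card \<sigma>) - 1"

definition simplices :: "'v set set \<Rightarrow> int \<Rightarrow> 'v set set" where
  "simplices K p = {\<sigma>\<in>K. sdim \<sigma> = p}"

definition free_pair :: "'v set set \<Rightarrow> 'v set \<Rightarrow> 'v set \<Rightarrow> bool" where
  "free_pair K \<sigma> \<tau> \<longleftrightarrow> \<sigma> \<in> K \<and> \<tau> \<in> K \<and> \<sigma> \<subset> \<tau> \<and>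
     (\<forall>\<rho>\<in>K. \<sigma> \<subseteq> \<rho> \<longrightarrow> \<rho> = \<sigma> \<or> \<rho> = \<tau>)"

definition facet :: "'v set set \<Rightarrow> 'v set \<Rightarrow> bool" where
  "facet K \<nu> \<longleftrightarrow> \<nu> \<in> K \<and> (\<forall>\<rho>\<in>K. \<nu> \<subseteq> \<rho> \<longrightarrow> \<rho> = \<nu>)"

definition elem_expansion :: "'v set set \<Rightarrow> 'v set set \<Rightarrow> 'v set \<Rightarrow> 'v set \<Rightarrow> bool" where
  "elem_expansion K K' \<sigma> \<tau> \<longleftrightarrow> simplicial_complex K' \<and> free_pair K' \<sigma> \<tau> \<and> K = K' - {\<sigma>, \<tau>}"

definition elem_filling :: "'v set set \<Rightarrow> 'v set set \<Rightarrow> 'v set \<Rightarrow> bool" where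
  "elem_filling K K' \<nu> \<longleftrightarrow> simplicial_complex K' \<and> facet K' \<nu> \<and> K = K' - {\<nu>}"

definition morse_sequence :: "'v set set \<Rightarrow> 'v set set list \<Rightarrow> bool" where
  "morse_sequence K Ks \<longleftrightarrow> Ks \<noteq> [] \<and> hd Ks = {} \<and> last Ks = K \<and>
     (\<forall>i < length Ks - 1.
        (\<exists>\<nu>. elem_filling (Ks ! i) (Ks ! Suc i) \<nu>) \<or>
        (\<exists>\<sigma> \<tau>. elem_expansion (Ks ! i) (Ks ! Suc i) \<sigma> \<tau>))"

definition critical :: "'v set set list \<Rightarrow> 'v set set" where
  "critical Ks = {\<nu>. \<exists>i < length Ks - 1. elem_filling (Ks ! i) (Ks ! Suc i) \<nu>}"

definition lower_regular :: "'v set set list \<Rightarrow> 'v set set" where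
  "lower_regular Ks = {\<sigma>. \<exists>i < length Ks - 1. \<exists>\<tau>. elem_expansion (Ks ! i) (Ks ! Suc i) \<sigma> \<tau>}"

definition upper_regular :: "'v set set list \<Rightarrow> 'v set set" where
  "upper_regular Ks = {\<tau>. \<exists>i < length Ks - 1. \<exists>\<sigma>. elem_expansion (Ks ! i) (Ks ! Suc i) \<sigma> \<tau>}"

text \<open>Linear (mod 2) extension of a map on simplices to chains (finite sets of simplices).\<close>
definition lin_ext :: "('v set \<Rightarrow> 'v set set) \<Rightarrow> 'v set set \<Rightarrow> 'v set set" where
  "lin_ext f c = {\<nu>. odd (card {\<sigma>\<in>c. \<nu> \<in> f \<sigma>})}"

definition bdry :: "'v set set \<Rightarrow> 'v set \<Rightarrow> 'v set set" where
  "bdry K \<sigma> = {\<tau>\<in>K. \<tau> \<subset> \<sigma> \<and> sdim \<tau> = sdim \<sigma> - 1}"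

definition cobdry :: "'v set set \<Rightarrow> 'v set \<Rightarrow> 'v set set" where
  "cobdry K \<sigma> = {\<tau>\<in>K. \<sigma> \<subset> \<tau> \<and> sdim \<tau> = sdim \<sigma> + 1}"

definition cycles :: "'v set set \<Rightarrow> int \<Rightarrow> 'v set set set" where
  "cycles K p = {z. z \<subseteq> simplices K p \<and> lin_ext (bdry K) z = {}}"

definition cocycles :: "'v set set \<Rightarrow> int \<Rightarrow> 'v set set set" where
  "cocycles K p = {z. z \<subseteq> simplices K p \<and> lin_ext (cobdry K) z = {}}"

definition is_reference_map :: "'v set set \<Rightarrow> 'v set set list \<Rightarrow> ('v set \<Rightarrow> 'v set set) \<Rightarrow> bool" where
  "is_reference_map K Ks f \<longleftrightarrow>
     (\<forall>\<sigma>\<in>K. f \<sigma> \<subseteq> critical Ks \<inter> simplices K (sdim \<sigma>)) \<and>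
     (\<forall>\<nu>\<in>critical Ks. f \<nu> = {\<nu>}) \<and>
     (\<forall>\<tau>\<in>upper_regular Ks. f \<tau> = {} \<and> lin_ext f (bdry K \<tau>) = {})"

definition is_coreference_map :: "'v set set \<Rightarrow> 'v set set list \<Rightarrow> ('v set \<Rightarrow> 'v set set) \<Rightarrow> bool" where
  "is_coreference_map K Ks g \<longleftrightarrow>
     (\<forall>\<sigma>\<in>K. g \<sigma> \<subseteq> critical Ks \<inter> simplices K (sdim \<sigma>)) \<and>
     (\<forall>\<nu>\<in>critical Ks. g \<nu> = {\<nu>}) \<and>
     (\<forall>\<sigma>\<in>lower_regular Ks. g \<sigma> = {} \<and> lin_ext g (cobdry K \<sigma>) = {})"

definition W_minus :: "'v set set list \<Rightarrow> int \<Rightarrow> 'v set set" where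
  "W_minus Ks p = {\<nu>\<in>upper_regular Ks. sdim \<nu> \<le> p} \<union>
                  {\<nu>\<in>critical Ks \<union> lower_regular Ks. sdim \<nu> \<le> p - 1}"

definition W_plus :: "'v set set list \<Rightarrow> int \<Rightarrow> 'v set set" where
  "W_plus Ks p = {\<nu>\<in>critical Ks \<union> upper_regular Ks. sdim \<nu> \<le> p} \<union>
                 {\<nu>\<in>lower_regular Ks. sdim \<nu> \<le> p - 1}"

end

theory Submission
  imports Defs
begin

lemma card_symdiff_parity:
  assumes "finite X" "finite Y"
  shows "card ((X - Y) \<union> (Y - X)) + 2 * card (X \<inter> Y) = card X + card Y"
proof -
  have "card X = card ((X - Y) \<union> (X \<inter> Y))" by (metis Un_Diff_Int)
  also have "\<dots> = card (X - Y) + card (X \<inter> Y)" using assms by (intro card_Un_disjoint) auto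
  finally have 1: "card X = card (X - Y) + card (X \<inter> Y)" .
  have "card Y = card ((Y - X) \<union> (X \<inter> Y))" by (metis Un_Diff_Int Int_commute)
  also have "\<dots> = card (Y - X) + card (X \<inter> Y)" using assms by (intro card_Un_disjoint) auto
  finally have 2: "card Y = card (Y - X) + card (X \<inter> Y)" .
  note 1 2
  moreover have "card ((X - Y) \<union> (Y - X)) = card (X - Y) + card (Y - X)"
    using assms by (intro card_Un_disjoint) auto
  ultimately show ?thesis by simp
qed

lemma lin_ext_symdiff:
  assumes "finite A" "finite B"
  shows "lin_ext h ((A - B) \<union> (B - A)) = (lin_ext h A - lin_ext h B) \<union> (lin_ext h B - lin_ext h A)"
proof -
  have "odd (card {\<sigma>\<in>(A - B) \<union> (B - A). \<nu> \<in> h \<sigma>}) \<longleftrightarrow>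
        (odd (card {\<sigma>\<in>A. \<nu> \<in> h \<sigma>}) \<noteq> odd (card {\<sigma>\<in>B. \<nu> \<in> h \<sigma>}))" for \<nu>
  proof -
    let ?X = "{\<sigma>\<in>A. \<nu> \<in> h \<sigma>}" and ?Y = "{\<sigma>\<in>B. \<nu> \<in> h \<sigma>}"
    have e: "{\<sigma>\<in>(A - B) \<union> (B - A). \<nu> \<in> h \<sigma>} = (?X - ?Y) \<union> (?Y - ?X)" by auto
    have "card ((?X - ?Y) \<union> (?Y - ?X)) + 2 * card (?X \<inter> ?Y) = card ?X + card ?Y"
      using assms by (intro card_symdiff_parity) auto
    then show ?thesis unfolding e by presburger
  qed
  then show ?thesis unfolding lin_ext_def by auto
qed

lemma ms_step:
  assumes "morse_sequence K Ks" "i < length Ks - 1"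
  shows "Ks ! i \<subseteq> Ks ! Suc i" "simplicial_complex (Ks ! Suc i)"
  using assms unfolding morse_sequence_def elem_filling_def elem_expansion_def by blast+

lemma ms_mono:
  assumes "morse_sequence K Ks" "a \<le> b" "b < length Ks"
  shows "Ks ! a \<subseteq> Ks ! b"
  using assms(2,3)
proof (induction b)
  case 0 then show ?case by simp
next
  case (Suc b)
  show ?case
  proof (cases "a = Suc b")
    case False
    then have "Ks ! a \<subseteq> Ks ! b" using Suc by simp
    also have "\<dots> \<subseteq> Ks ! Suc b" using ms_step(1)[OF assms(1), of b] Suc by simp
    finally show ?thesis .
  qed simp
qed

lemma ms_last:
  assumes "morse_sequence K Ks"
  shows "K = Ks ! (length Ks - 1)"
  using assms last_conv_nth[of Ks] unfolding morse_sequence_def by auto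

lemma ms_sub_K:
  assumes "morse_sequence K Ks" "a < length Ks"
  shows "Ks ! a \<subseteq> K"
proof -
  have "Ks ! a \<subseteq> Ks ! (length Ks - 1)" using ms_mono[OF assms(1), of a "length Ks - 1"] assms(2) by simp
  then show ?thesis using ms_last[OF assms(1)] by simp
qed

lemma ms_finite:
  assumes "morse_sequence K Ks"
  shows "simplicial_complex K"
proof (cases "length Ks = 1")
  case True
  then obtain x where "Ks = [x]" by (cases Ks) auto
  then have "K = {}" using assms unfolding morse_sequence_def by auto
  then show ?thesis unfolding simplicial_complex_def by simp
next
  case False
  have "Ks \<noteq> []" using assms unfolding morse_sequence_def by simp
  then have "length Ks \<noteq> 0" by simp
  then have l: "length Ks \<ge> 2" using False by linarith
  have "simplicial_complex (Ks ! Suc (length Ks - 2))" using ms_step(2)[OF assms, of "length Ks - 2"] l by simp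
  moreover have "Suc (length Ks - 2) = length Ks - 1" using l by simp
  ultimately show ?thesis using ms_last[OF assms] by simp
qed

lemma ms_cover_n:
  assumes "morse_sequence K Ks" "n < length Ks"
  shows "Ks ! n \<subseteq> critical Ks \<union> lower_regular Ks \<union> upper_regular Ks"
  using assms(2)
proof (induction n)
  case 0
  have "Ks \<noteq> []" "hd Ks = {}" using assms unfolding morse_sequence_def by auto
  then show ?case using hd_conv_nth[of Ks] by simp
next
  case (Suc n)
  then have i: "n < length Ks - 1" by simp
  from assms(1) i consider (f) \<nu> where "elem_filling (Ks ! n) (Ks ! Suc n) \<nu>"
    | (e) \<sigma> \<tau> where "elem_expansion (Ks ! n) (Ks ! Suc n) \<sigma> \<tau>"
    unfolding morse_sequence_def by blast
  then show ?case
  proof cases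
    case f
    then have "Ks ! Suc n \<subseteq> Ks ! n \<union> {\<nu>}" unfolding elem_filling_def by auto
    moreover have "\<nu> \<in> critical Ks" using f i unfolding critical_def by blast
    ultimately show ?thesis using Suc by auto
  next
    case e
    then have "Ks ! Suc n \<subseteq> Ks ! n \<union> {\<sigma>, \<tau>}" unfolding elem_expansion_def by auto
    moreover have "\<sigma> \<in> lower_regular Ks" using e i unfolding lower_regular_def by blast
    moreover have "\<tau> \<in> upper_regular Ks" using e i unfolding upper_regular_def by blast
    ultimately show ?thesis using Suc by auto
  qed
qed

lemma ms_cover:
  assumes "morse_sequence K Ks" "\<sigma> \<in> K"
  shows "\<sigma> \<in> critical Ks \<or> \<sigma> \<in> lower_regular Ks \<or> \<sigma> \<in> upper_regular Ks"
proof -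
  have "length Ks - 1 < length Ks" using assms unfolding morse_sequence_def by simp
  then show ?thesis using ms_cover_n[OF assms(1)] ms_last[OF assms(1)] assms(2) by blast
qed

lemma free_pair_card:
  assumes sc: "simplicial_complex K'" and fp: "free_pair K' \<sigma> \<tau>"
  shows "card \<tau> = Suc (card \<sigma>)"
proof -
  have st: "\<sigma> \<subset> \<tau>" "\<tau> \<in> K'" "\<sigma> \<in> K'" using fp unfolding free_pair_def by auto
  have cl: "\<And>a b. a \<in> K' \<Longrightarrow> b \<noteq> {} \<Longrightarrow> b \<subseteq> a \<Longrightarrow> b \<in> K'"
    and fin: "\<And>a. a \<in> K' \<Longrightarrow> finite a"
    using sc unfolding simplicial_complex_def by blast+
  have ft: "finite \<tau>" using fin st(2) .
  obtain x where x: "x \<in> \<tau>" "x \<notin> \<sigma>" using st(1) by blast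
  have rs: "insert x \<sigma> \<subseteq> \<tau>" using x st(1) by blast
  have "insert x \<sigma> \<in> K'" by (rule cl[OF st(2) _ rs]) simp
  moreover have "\<sigma> \<subseteq> insert x \<sigma>" "insert x \<sigma> \<noteq> \<sigma>" using x by auto
  ultimately have e: "insert x \<sigma> = \<tau>" using fp unfolding free_pair_def by blast
  have "finite \<sigma>" using fin st(3) .
  then have "card (insert x \<sigma>) = Suc (card \<sigma>)" using x(2) by simp
  then show ?thesis using e by simp
qed

lemma part1:
  assumes ms: "morse_sequence K Ks" and cs: "c \<subseteq> K" and cu: "c \<subseteq> upper_regular Ks"
    and cyc: "lin_ext (bdry K) c = {}"
  shows "c = {}"
proof (rule ccontr)
  assume "c \<noteq> {}"
  define S where "S = {i. i < length Ks - 1 \<and> (\<exists>\<sigma> \<tau>. \<tau> \<in> c \<and> elem_expansion (Ks!i) (Ks!Suc i) \<sigma> \<tau>)}"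
  have "S \<noteq> {}" using \<open>c \<noteq> {}\<close> cu unfolding S_def upper_regular_def by blast
  moreover have "finite S" unfolding S_def by simp
  ultimately have iS: "Max S \<in> S" and mx: "\<And>j. j \<in> S \<Longrightarrow> j \<le> Max S" by auto
  define i where "i = Max S"
  obtain \<sigma> \<tau> where t: "\<tau> \<in> c" and ex: "elem_expansion (Ks!i) (Ks!Suc i) \<sigma> \<tau>" and il: "i < length Ks - 1"
    using iS unfolding S_def i_def by blast
  have sc: "simplicial_complex (Ks!Suc i)" and fp: "free_pair (Ks!Suc i) \<sigma> \<tau>"
    using ex unfolding elem_expansion_def by auto
  have cd: "card \<tau> = Suc (card \<sigma>)" by (rule free_pair_card[OF sc fp])
  have fp3: "\<sigma> \<in> Ks!Suc i" "\<tau> \<in> Ks!Suc i" "\<sigma> \<subset> \<tau>" using fp unfolding free_pair_def by blast+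
  have sub: "Ks!Suc i \<subseteq> K" using ms_sub_K[OF ms, of "Suc i"] il by simp
  have "\<sigma> \<in> K" using fp3 sub by blast
  have "sdim \<sigma> = sdim \<tau> - 1" using cd unfolding sdim_def by simp
  then have sb: "\<sigma> \<in> bdry K \<tau>" using \<open>\<sigma> \<in> K\<close> fp3 unfolding bdry_def by blast
  have "{\<rho>\<in>c. \<sigma> \<in> bdry K \<rho>} = {\<tau>}"
  proof (intro equalityI subsetI)
    fix \<rho> assume r: "\<rho> \<in> {\<rho>\<in>c. \<sigma> \<in> bdry K \<rho>}"
    then obtain j \<sigma>' where j: "j < length Ks - 1" "elem_expansion (Ks!j) (Ks!Suc j) \<sigma>' \<rho>"
      using cu unfolding upper_regular_def by blast
    then have "j \<in> S" using r unfolding S_def by blast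
    then have "j \<le> i" using mx i_def by simp
    moreover have "\<rho> \<in> Ks ! Suc j" using j unfolding elem_expansion_def free_pair_def by auto
    moreover have "Suc i < length Ks" using il by simp
    ultimately have "\<rho> \<in> Ks ! Suc i" using ms_mono[OF ms, of "Suc j" "Suc i"] by auto
    moreover have "\<sigma> \<subset> \<rho>" using r unfolding bdry_def by auto
    ultimately show "\<rho> \<in> {\<tau>}" using fp unfolding free_pair_def by blast
  qed (use t sb in auto)
  then have "\<sigma> \<in> lin_ext (bdry K) c" unfolding lin_ext_def by simp
  then show False using cyc by simp
qed

lemma part2:
  assumes ms: "morse_sequence K Ks" and cs: "c \<subseteq> K" and cu: "c \<subseteq> lower_regular Ks"
    and cyc: "lin_ext (cobdry K) c = {}"
  shows "c = {}"
proof (rule ccontr)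
  assume "c \<noteq> {}"
  define S where "S = {i. i < length Ks - 1 \<and> (\<exists>\<sigma> \<tau>. \<sigma> \<in> c \<and> elem_expansion (Ks!i) (Ks!Suc i) \<sigma> \<tau>)}"
  have "S \<noteq> {}" using \<open>c \<noteq> {}\<close> cu unfolding S_def lower_regular_def by blast
  moreover have "finite S" unfolding S_def by simp
  ultimately have iS: "Min S \<in> S" and mn: "\<And>j. j \<in> S \<Longrightarrow> Min S \<le> j" by auto
  define i where "i = Min S"
  obtain \<sigma> \<tau> where t: "\<sigma> \<in> c" and ex: "elem_expansion (Ks!i) (Ks!Suc i) \<sigma> \<tau>" and il: "i < length Ks - 1"
    using iS unfolding S_def i_def by blast
  have sc: "simplicial_complex (Ks!Suc i)" and fp: "free_pair (Ks!Suc i) \<sigma> \<tau>"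
    and ki: "Ks!i = Ks!Suc i - {\<sigma>, \<tau>}"
    using ex unfolding elem_expansion_def by auto
  have cd: "card \<tau> = Suc (card \<sigma>)" by (rule free_pair_card[OF sc fp])
  have fp3: "\<sigma> \<in> Ks!Suc i" "\<tau> \<in> Ks!Suc i" "\<sigma> \<subset> \<tau>" using fp unfolding free_pair_def by blast+
  have sub: "Ks!Suc i \<subseteq> K" using ms_sub_K[OF ms, of "Suc i"] il by simp
  have "\<tau> \<in> K" using fp3 sub by blast
  have "sdim \<tau> = sdim \<sigma> + 1" using cd unfolding sdim_def by simp
  then have sb: "\<tau> \<in> cobdry K \<sigma>" using \<open>\<tau> \<in> K\<close> fp3 unfolding cobdry_def by blast
  have scK: "simplicial_complex K" by (rule ms_finite[OF ms])
  have "{\<rho>\<in>c. \<tau> \<in> cobdry K \<rho>} = {\<sigma>}"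
  proof (intro equalityI subsetI)
    fix \<rho> assume r: "\<rho> \<in> {\<rho>\<in>c. \<tau> \<in> cobdry K \<rho>}"
    then obtain j \<tau>' where j: "j < length Ks - 1" "elem_expansion (Ks!j) (Ks!Suc j) \<rho> \<tau>'"
      using cu unfolding lower_regular_def by blast
    then have "j \<in> S" using r unfolding S_def by blast
    then have "i \<le> j" using mn i_def by simp
    have nj: "\<rho> \<notin> Ks ! j" using j unfolding elem_expansion_def by auto
    have rt: "\<rho> \<subset> \<tau>" using r unfolding cobdry_def by auto
    have rK: "\<rho> \<in> K" using r cs by blast
    have "\<forall>\<sigma>\<in>K. \<sigma> \<noteq> {} \<and> finite \<sigma>" using scK unfolding simplicial_complex_def by blast
    then have rne: "\<rho> \<noteq> {}" using rK by blast
    have cl: "\<And>a b. a \<in> Ks ! Suc i \<Longrightarrow> b \<noteq> {} \<Longrightarrow> b \<subseteq> a \<Longrightarrow> b \<in> Ks ! Suc i"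
      using sc unfolding simplicial_complex_def by blast
    have "\<rho> \<in> Ks ! Suc i" using cl[OF fp3(2) rne] rt by blast
    show "\<rho> \<in> {\<sigma>}"
    proof (rule ccontr)
      assume "\<rho> \<notin> {\<sigma>}"
      then have "\<rho> \<in> Ks ! i" using ki \<open>\<rho> \<in> Ks ! Suc i\<close> rt by auto
      moreover have "j < length Ks" using j(1) by simp
      ultimately have "\<rho> \<in> Ks ! j" using ms_mono[OF ms \<open>i \<le> j\<close>] by auto
      then show False using nj by simp
    qed
  qed (use t sb in auto)
  then have "\<tau> \<in> lin_ext (cobdry K) c" unfolding lin_ext_def by simp
  then show False using cyc by simp
qed

theorem theorem7:
  fixes K :: "'v set set" and Ks :: "'v set set list"
    and f g :: "'v set \<Rightarrow> 'v set set" and p :: int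
  assumes "morse_sequence K Ks"
    and "is_reference_map K Ks f"
    and "is_coreference_map K Ks g"
  shows "(\<forall>z z'. z \<in> cycles K p \<and> z' \<in> cycles K p \<and> lin_ext f z = lin_ext f z' \<and>
            z \<subseteq> W_plus Ks p \<and> z' \<subseteq> W_plus Ks p \<longrightarrow> z = z') \<and>
         (\<forall>z z'. z \<in> cocycles K p \<and> z' \<in> cocycles K p \<and> lin_ext g z = lin_ext g z' \<and>
            z \<subseteq> K - W_minus Ks p \<and> z' \<subseteq> K - W_minus Ks p \<longrightarrow> z = z')"
proof (intro conjI allI impI)
  have fK: "finite K" using ms_finite[OF assms(1)] unfolding simplicial_complex_def by blast
  have cu_ex: "\<And>\<nu>. \<nu> \<in> critical Ks \<Longrightarrow> \<nu> \<in> upper_regular Ks \<Longrightarrow> False"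
    using assms(2) unfolding is_reference_map_def by fastforce
  have cl_ex: "\<And>\<nu>. \<nu> \<in> critical Ks \<Longrightarrow> \<nu> \<in> lower_regular Ks \<Longrightarrow> False"
    using assms(3) unfolding is_coreference_map_def by fastforce
  fix z z'
  {
    assume h: "z \<in> cycles K p \<and> z' \<in> cycles K p \<and> lin_ext f z = lin_ext f z' \<and>
            z \<subseteq> W_plus Ks p \<and> z' \<subseteq> W_plus Ks p"
    define c where "c = (z - z') \<union> (z' - z)"
    have zs: "z \<subseteq> simplices K p" "z' \<subseteq> simplices K p" using h unfolding cycles_def by auto
    have "simplices K p \<subseteq> K" unfolding simplices_def by blast
    then have "finite (simplices K p)" using fK finite_subset by blast
    then have fz: "finite z" "finite z'" using zs finite_subset by blast+
    have cK: "c \<subseteq> simplices K p" using zs unfolding c_def by auto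
    have "lin_ext (bdry K) z = {}" "lin_ext (bdry K) z' = {}" using h unfolding cycles_def by blast+
    then have cyc: "lin_ext (bdry K) c = {}" unfolding c_def lin_ext_symdiff[OF fz] by simp
    have "lin_ext f z = lin_ext f z'" using h by blast
    then have fc: "lin_ext f c = {}" unfolding c_def lin_ext_symdiff[OF fz] by simp
    have cW: "c \<subseteq> W_plus Ks p" using h unfolding c_def by auto
    have cu: "c \<subseteq> upper_regular Ks"
    proof
      fix \<nu> assume nc: "\<nu> \<in> c"
      have cw: "\<forall>\<sigma>\<in>c. \<sigma> \<in> critical Ks \<or> \<sigma> \<in> upper_regular Ks"
        using cW cK unfolding W_plus_def simplices_def by fastforce
      show "\<nu> \<in> upper_regular Ks"
      proof (rule ccontr)
        assume "\<nu> \<notin> upper_regular Ks"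
        then have cr: "\<nu> \<in> critical Ks" using cw nc by blast
        have "{\<sigma>\<in>c. \<nu> \<in> f \<sigma>} = {\<nu>}"
        proof (intro equalityI subsetI)
          fix \<sigma> assume s: "\<sigma> \<in> {\<sigma>\<in>c. \<nu> \<in> f \<sigma>}"
          then consider "\<sigma> \<in> critical Ks" | "\<sigma> \<in> upper_regular Ks" using cw by blast
          then show "\<sigma> \<in> {\<nu>}" using s assms(2) unfolding is_reference_map_def by cases auto
        qed (use nc cr assms(2) in \<open>auto simp: is_reference_map_def\<close>)
        then have "\<nu> \<in> lin_ext f c" unfolding lin_ext_def by simp
        then show False using fc by simp
      qed
    qed
    have "c = {}" by (rule part1[OF assms(1) _ cu cyc]) (use cK in \<open>auto simp: simplices_def\<close>)
    then show "z = z'" unfolding c_def by auto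
  }
  {
    assume h: "z \<in> cocycles K p \<and> z' \<in> cocycles K p \<and> lin_ext g z = lin_ext g z' \<and>
            z \<subseteq> K - W_minus Ks p \<and> z' \<subseteq> K - W_minus Ks p"
    define c where "c = (z - z') \<union> (z' - z)"
    have zs: "z \<subseteq> simplices K p" "z' \<subseteq> simplices K p" using h unfolding cocycles_def by auto
    have "simplices K p \<subseteq> K" unfolding simplices_def by blast
    then have "finite (simplices K p)" using fK finite_subset by blast
    then have fz: "finite z" "finite z'" using zs finite_subset by blast+
    have cK: "c \<subseteq> simplices K p" using zs unfolding c_def by auto
    have "lin_ext (cobdry K) z = {}" "lin_ext (cobdry K) z' = {}" using h unfolding cocycles_def by blast+
    then have cyc: "lin_ext (cobdry K) c = {}" unfolding c_def lin_ext_symdiff[OF fz] by simp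
    have "lin_ext g z = lin_ext g z'" using h by blast
    then have fc: "lin_ext g c = {}" unfolding c_def lin_ext_symdiff[OF fz] by simp
    have cW: "c \<inter> W_minus Ks p = {}" using h unfolding c_def by auto
    have cw: "\<forall>\<sigma>\<in>c. \<sigma> \<in> critical Ks \<or> \<sigma> \<in> lower_regular Ks"
    proof
      fix \<sigma> assume s: "\<sigma> \<in> c"
      then have "\<sigma> \<in> K" "sdim \<sigma> = p" using cK unfolding simplices_def by auto
      then have "\<sigma> \<notin> upper_regular Ks" using cW s unfolding W_minus_def by auto
      then show "\<sigma> \<in> critical Ks \<or> \<sigma> \<in> lower_regular Ks" using ms_cover[OF assms(1) \<open>\<sigma> \<in> K\<close>] by blast
    qed
    have cu: "c \<subseteq> lower_regular Ks"
    proof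
      fix \<nu> assume nc: "\<nu> \<in> c"
      show "\<nu> \<in> lower_regular Ks"
      proof (rule ccontr)
        assume "\<nu> \<notin> lower_regular Ks"
        then have cr: "\<nu> \<in> critical Ks" using cw nc by blast
        have "{\<sigma>\<in>c. \<nu> \<in> g \<sigma>} = {\<nu>}"
        proof (intro equalityI subsetI)
          fix \<sigma> assume s: "\<sigma> \<in> {\<sigma>\<in>c. \<nu> \<in> g \<sigma>}"
          then consider "\<sigma> \<in> critical Ks" | "\<sigma> \<in> lower_regular Ks" using cw by blast
          then show "\<sigma> \<in> {\<nu>}" using s assms(3) unfolding is_coreference_map_def by cases auto
        qed (use nc cr assms(3) in \<open>auto simp: is_coreference_map_def\<close>)
        then have "\<nu> \<in> lin_ext g c" unfolding lin_ext_def by simp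
        then show False using fc by simp
      qed
    qed
    have "c = {}" by (rule part2[OF assms(1) _ cu cyc]) (use cK in \<open>auto simp: simplices_def\<close>)
    then show "z = z'" unfolding c_def by auto
  }
qed

end
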